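(* Let $G$ be a simple connected bipartite graph on $n$ vertices with maximum degree $\Delta$, and let $S=\sum_{j=1}^{n}D_j$. Suppose that $\deg(v_1)=\deg(v_2)=\cdots=\deg(v_k)=\Delta\le n-2$ for some $k$ with $1\le k\le n$. Then $$S_{\mathcal{D}}(G)\ \ge\ \max_{1\le i\le k}\frac{\sqrt{a_i^{2}+4b_i(1+\Delta)(n-\Delta-1)}}{(1+\Delta)(n-\Delta-1)},$$ where $a_i=(\Delta+1)(S-2D_i-2t_{v_i}\Delta)+2n\Delta^{2}$ and $b_i=D_i^{2}-2S\Delta^{2}+2D_it_{v_i}\Delta+t_{v_i}^{2}\Delta^{2}$.
   Context: $G$ has vertex set $\{v_1,\dots,v_n\}$; $d_G(u,v)$ denotes the distance in $G$. The distance matrix is $\mathcal{D}(G)=(d_G(v_i,v_j))_{n\times n}$. The transmission (distance degree) of $v_i$ is $D_i=\sum_{j\ne i}d_G(v_i,v_j)$, the $i$-th row sum of $\mathcal{D}(G)$. For a vertex $v$ of degree $d_v$, $t_v=\frac{1}{d_v}\sum_{v_j\sim v}D_j$ is the average distance degree of the neighbours of $v$. Let $\rho^{\mathcal{D}}(G)$ and $\rho^{\mathcal{D}}_{min}(G)$ be the largest and least eigenvalues of $\mathcal{D}(G)$; the distance spread is $S_{\mathcal{D}}(G)=\rho^{\mathcal{D}}(G)-\rho^{\mathcal{D}}_{min}(G)$. *)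

theory Defs
  imports "HOL-Analysis.Analysis"
begin

text \<open>Simple graphs on a finite vertex type: adjacency relation E, symmetric and irreflexive.
  Vertex set = UNIV :: 'a set, so n = CARD('a).\<close>

definition simple_graph :: "('a \<Rightarrow> 'a \<Rightarrow> bool) \<Rightarrow> bool" where
  "simple_graph E \<longleftrightarrow> (\<forall>u v. E u v \<longrightarrow> E v u) \<and> (\<forall>v. \<not> E v v)"

definition connected_graph :: "('a \<Rightarrow> 'a \<Rightarrow> bool) \<Rightarrow> bool" where
  "connected_graph E \<longleftrightarrow> (\<forall>u v. \<exists>k. (E ^^ k) u v)"

definition bipartite_graph :: "('a \<Rightarrow> 'a \<Rightarrow> bool) \<Rightarrow> bool" where
  "bipartite_graph E \<longleftrightarrow> (\<exists>c :: 'a \<Rightarrow> bool. \<forall>u v. E u v \<longrightarrow> c u \<noteq> c v)"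

definition gdist :: "('a \<Rightarrow> 'a \<Rightarrow> bool) \<Rightarrow> 'a \<Rightarrow> 'a \<Rightarrow> nat" where
  "gdist E u v = (LEAST k. (E ^^ k) u v)"

definition gdeg :: "('a \<Rightarrow> 'a \<Rightarrow> bool) \<Rightarrow> 'a \<Rightarrow> nat" where
  "gdeg E v = card {w. E v w}"

definition max_deg :: "('a::finite \<Rightarrow> 'a \<Rightarrow> bool) \<Rightarrow> nat" where
  "max_deg E = Max (range (gdeg E))"

definition transmission :: "('a::finite \<Rightarrow> 'a \<Rightarrow> bool) \<Rightarrow> 'a \<Rightarrow> real" where
  "transmission E v = (\<Sum>u\<in>UNIV. real (gdist E v u))"

definition avg_nbr_trans :: "('a::finite \<Rightarrow> 'a \<Rightarrow> bool) \<Rightarrow> 'a \<Rightarrow> real" where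
  "avg_nbr_trans E v = (\<Sum>w\<in>{w. E v w}. transmission E w) / real (gdeg E v)"

definition dist_matrix :: "('a::finite \<Rightarrow> 'a \<Rightarrow> bool) \<Rightarrow> real^'a^'a" where
  "dist_matrix E = (\<chi> i j. real (gdist E i j))"

definition is_eigenvalue :: "real^'n^'n \<Rightarrow> real \<Rightarrow> bool" where
  "is_eigenvalue A l \<longleftrightarrow> (\<exists>x. x \<noteq> 0 \<and> A *v x = l *\<^sub>R x)"

definition largest_eig :: "real^'n^'n \<Rightarrow> real" where
  "largest_eig A = Max {l. is_eigenvalue A l}"

definition least_eig :: "real^'n^'n \<Rightarrow> real" where
  "least_eig A = Min {l. is_eigenvalue A l}"

definition distance_spread :: "('a::finite \<Rightarrow> 'a \<Rightarrow> bool) \<Rightarrow> real" where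
  "distance_spread E = largest_eig (dist_matrix E) - least_eig (dist_matrix E)"

end

theory Submission
  imports Defs
begin


definition symm :: "real^'n^'n \<Rightarrow> bool" where
  "symm A \<longleftrightarrow> (\<forall>i j. A$i$j = A$j$i)"

lemma symm_inner:
  assumes "symm A"
  shows "(A *v x) \<bullet> y = x \<bullet> (A *v y)"
proof -
  have "(A *v x) \<bullet> y = (\<Sum>i\<in>UNIV. \<Sum>j\<in>UNIV. A$i$j * x$j * y$i)"
    by (simp add: inner_vec_def matrix_vector_mult_def sum_distrib_left sum_distrib_right ac_simps)
  also have "\<dots> = (\<Sum>j\<in>UNIV. \<Sum>i\<in>UNIV. A$i$j * x$j * y$i)"
    by (rule sum.swap)
  also have "\<dots> = x \<bullet> (A *v y)"
    using assms unfolding symm_def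
    by (simp add: inner_vec_def matrix_vector_mult_def sum_distrib_left mult.commute mult.left_commute)
  finally show ?thesis .
qed

lemma eig_finite:
  assumes "symm A"
  shows "finite {l. is_eigenvalue A l}"
proof -
  let ?L = "{l. is_eigenvalue A l}"
  define ev where "ev l = (SOME x. x \<noteq> 0 \<and> A *v x = l *\<^sub>R x)" for l
  have ev: "ev l \<noteq> 0 \<and> A *v ev l = l *\<^sub>R ev l" if "l \<in> ?L" for l
    using that unfolding ev_def is_eigenvalue_def by (metis (mono_tags, lifting) mem_Collect_eq someI_ex)
  have inj: "inj_on ev ?L"
  proof (rule inj_onI)
    fix l1 l2 assume a: "l1 \<in> ?L" "l2 \<in> ?L" "ev l1 = ev l2"
    then have "l1 *\<^sub>R ev l1 = l2 *\<^sub>R ev l1" using ev by metis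
    then show "l1 = l2" using ev[OF a(1)] by (simp add: scaleR_cancel_right)
  qed
  have orth: "pairwise orthogonal (ev ` ?L)"
  proof (clarsimp simp: pairwise_def)
    fix l1 l2 assume a: "is_eigenvalue A l1" "is_eigenvalue A l2" "ev l1 \<noteq> ev l2"
    then have ne: "l1 \<noteq> l2" by auto
    have "(A *v ev l1) \<bullet> ev l2 = ev l1 \<bullet> (A *v ev l2)" by (rule symm_inner[OF assms])
    then have "l1 * (ev l1 \<bullet> ev l2) = l2 * (ev l1 \<bullet> ev l2)"
      using ev a by simp
    then show "orthogonal (ev l1) (ev l2)" using ne by (simp add: orthogonal_def)
  qed
  have "0 \<notin> ev ` ?L" using ev by auto
  then have "independent (ev ` ?L)" using orth pairwise_orthogonal_independent by blast
  then have "finite (ev ` ?L)" using independent_bound by blast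
  then show ?thesis using inj finite_imageD by blast
qed

lemma sphere_nonempty: "sphere (0::real^'n) 1 \<noteq> {}"
proof -
  obtain i :: 'n where True by simp
  have "norm (axis i (1::real)) = 1" by simp
  then show ?thesis unfolding sphere_def by (simp, blast)
qed

lemma top_eig:
  assumes "symm A"
  shows "\<exists>\<mu>. is_eigenvalue A \<mu> \<and> (\<forall>x. x \<bullet> (A *v x) \<le> \<mu> * (x \<bullet> x))"
proof -
  let ?f = "\<lambda>x. x \<bullet> (A *v x)"
  have cont: "continuous_on (sphere 0 1) ?f"
    by (intro continuous_intros)
  obtain x0 where x0: "x0 \<in> sphere 0 1" and mx: "\<And>y. y \<in> sphere 0 1 \<Longrightarrow> ?f y \<le> ?f x0"
    using continuous_attains_sup[OF compact_sphere sphere_nonempty cont] by blast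
  define \<mu> where "\<mu> = ?f x0"
  have bound: "?f x \<le> \<mu> * (x \<bullet> x)" for x
  proof (cases "x = 0")
    case True then show ?thesis by simp
  next
    case False
    let ?y = "(1 / norm x) *\<^sub>R x"
    have "?y \<in> sphere 0 1" using False by (simp add: sphere_def)
    then have "?f ?y \<le> \<mu>" using mx \<mu>_def by blast
    moreover have npos: "norm x > 0" using False by simp
    moreover have "?f ?y = ?f x / (norm x)^2"
      by (simp add: matrix_vector_mult_scaleR power2_eq_square)
    ultimately have "?f x = (norm x)^2 * ?f ?y" "?f ?y \<le> \<mu>" by (simp_all add: field_simps)
    then have "?f x \<le> (norm x)^2 * \<mu>" by (metis mult_left_mono zero_le_power2)
    moreover have "x \<bullet> x = (norm x)^2" by (simp add: power2_norm_eq_inner)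
    ultimately show ?thesis by (simp add: mult.commute)
  qed
  have x00: "x0 \<bullet> x0 = 1" using x0 by (simp add: sphere_def power2_norm_eq_inner[symmetric])
  define z where "z = \<mu> *\<^sub>R x0 - A *v x0"
  define g where "g x = \<mu> * (x \<bullet> x) - ?f x" for x
  have gnn: "g x \<ge> 0" for x using bound[of x] by (simp add: g_def)
  have gx0: "g x0 = 0" using x00 by (simp add: g_def \<mu>_def)
  have exp: "g (x0 + t *\<^sub>R z) = g x0 + 2 * t * (z \<bullet> z) + t^2 * g z" for t
  proof -
    have s: "(A *v z) \<bullet> x0 = z \<bullet> (A *v x0)" by (rule symm_inner[OF assms])
    have "z \<bullet> z = z \<bullet> (\<mu> *\<^sub>R x0) - z \<bullet> (A *v x0)" by (simp add: z_def inner_diff_right)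
    then have h: "z \<bullet> z + z \<bullet> (A *v x0) = \<mu> * (x0 \<bullet> z)" by (simp add: inner_commute)
    have h2: "2 * t * (z \<bullet> z + z \<bullet> (A *v x0)) = 2 * t * (\<mu> * (x0 \<bullet> z))" using h by simp
    have c1: "x0 \<bullet> z = z \<bullet> x0" by (rule inner_commute)
    have c2: "x0 \<bullet> (A *v z) = z \<bullet> (A *v x0)" using s by (simp add: inner_commute)
    have key: "\<And>a b c. b + c = \<mu> * a \<Longrightarrow> \<mu> * (t * (a * 2)) = t * (b * 2) + t * (2 * c)"
    proof -
      fix a b c :: real assume hh: "b + c = \<mu> * a"
      have "t * (b * 2) + t * (2 * c) = 2 * t * (b + c)" by (simp add: algebra_simps)
      also have "\<dots> = \<mu> * (t * (a * 2))" using hh by simp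
      finally show "\<mu> * (t * (a * 2)) = t * (b * 2) + t * (2 * c)" by simp
    qed
    show ?thesis
      apply (simp add: g_def matrix_vector_right_distrib matrix_vector_mult_scaleR inner_add_left
          inner_add_right power2_eq_square c1 c2)
      using h2 unfolding c1 by (simp add: algebra_simps)
  qed
  have "z = 0"
  proof (rule ccontr)
    assume "z \<noteq> 0"
    then have zz: "z \<bullet> z > 0" by simp
    define t where "t = - (z \<bullet> z) / (g z + 1)"
    have gz: "g z \<ge> 0" by (rule gnn)
    have tneg: "t < 0" using zz gz by (simp add: t_def)
    have "t * g z > - 2 * (z \<bullet> z)"
    proof -
      have "t * g z = - (z \<bullet> z) * (g z / (g z + 1))" by (simp add: t_def)
      moreover have "g z / (g z + 1) < 2" using gz by (simp add: divide_less_eq)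
      then have "(z \<bullet> z) * (g z / (g z + 1)) < (z \<bullet> z) * 2"
        by (rule mult_strict_left_mono[OF _ zz])
      ultimately show ?thesis by linarith
    qed
    then have "2 * (z \<bullet> z) + t * g z > 0" by linarith
    then have "t * (2 * (z \<bullet> z) + t * g z) < 0"
      using tneg by (rule mult_neg_pos[OF _ , rotated])
    then have "g (x0 + t *\<^sub>R z) < 0" using exp[of t] gx0 by (simp add: power2_eq_square algebra_simps)
    then show False using gnn by (meson not_le)
  qed
  then have "A *v x0 = \<mu> *\<^sub>R x0" by (simp add: z_def)
  moreover have "x0 \<noteq> 0" using x00 by auto
  ultimately show ?thesis using bound unfolding is_eigenvalue_def by blast
qed



lemma neg_symm: "symm A \<Longrightarrow> symm (\<chi> i j. - A$i$j)"
  by (simp add: symm_def)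

lemma neg_mult: "(\<chi> i j. - A$i$j) *v x = - (A *v x)" for A :: "real^'n^'n"
proof -
  have "(\<Sum>j\<in>UNIV. - A $ i $ j * x $ j) = - (\<Sum>j\<in>UNIV. A $ i $ j * x $ j)" for i
  proof -
    have "(\<Sum>j\<in>UNIV. - A $ i $ j * x $ j) = (\<Sum>j\<in>UNIV. - (A $ i $ j * x $ j))" by simp
    also have "\<dots> = - (\<Sum>j\<in>UNIV. A $ i $ j * x $ j)" by (rule sum_negf)
    finally show ?thesis .
  qed
  then show ?thesis by (simp add: matrix_vector_mult_def vec_eq_iff)
qed

lemma largest_ge:
  assumes "symm A" "x \<bullet> x = 1"
  shows "x \<bullet> (A *v x) \<le> largest_eig A"
proof -
  obtain \<mu> where m: "is_eigenvalue A \<mu>" "\<And>x. x \<bullet> (A *v x) \<le> \<mu> * (x \<bullet> x)"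
    using top_eig[OF assms(1)] by blast
  have "\<mu> \<le> largest_eig A" unfolding largest_eig_def
    using m(1) eig_finite[OF assms(1)] by (simp add: Max_ge)
  then show ?thesis using m(2)[of x] assms(2) by simp
qed

lemma least_le:
  assumes "symm A" "x \<bullet> x = 1"
  shows "least_eig A \<le> x \<bullet> (A *v x)"
proof -
  obtain \<mu> where m: "is_eigenvalue (\<chi> i j. - A$i$j) \<mu>"
     "\<And>x. x \<bullet> ((\<chi> i j. - A$i$j) *v x) \<le> \<mu> * (x \<bullet> x)"
    using top_eig[OF neg_symm[OF assms(1)]] by blast
  have "is_eigenvalue A (-\<mu>)" using m(1) unfolding is_eigenvalue_def neg_mult
    by (metis minus_equation_iff scaleR_minus_left)
  then have "least_eig A \<le> -\<mu>" unfolding least_eig_def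
    using eig_finite[OF assms(1)] by (simp add: Min_le)
  then show ?thesis using m(2)[of x] assms(2) by (simp add: neg_mult)
qed

lemma spread_ge:
  assumes A: "symm A" and uu: "u \<bullet> u = 1" and ww: "w \<bullet> w = 1" and uw: "u \<bullet> w = 0"
  shows "sqrt ((u \<bullet> (A *v u) - w \<bullet> (A *v w))^2 + 4 * (u \<bullet> (A *v w))^2)
         \<le> largest_eig A - least_eig A"
proof -
  define p where "p = u \<bullet> (A *v u)"
  define q where "q = w \<bullet> (A *v w)"
  define r where "r = u \<bullet> (A *v w)"
  define L where "L = sqrt ((p - q)^2 + 4 * r^2)"
  have rw: "w \<bullet> (A *v u) = r" unfolding r_def using symm_inner[OF A, of u w] by (simp add: inner_commute)
  have gen: "(c * c - s * s) * (p - q) + 4 * (c * s) * r \<le> largest_eig A - least_eig A"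
    if cs: "c * c + s * s = 1" for c s
  proof -
    define x where "x = c *\<^sub>R u + s *\<^sub>R w"
    define y where "y = (-s) *\<^sub>R u + c *\<^sub>R w"
    have xx: "x \<bullet> x = 1" using cs uu ww uw
      by (simp add: x_def inner_add_left inner_add_right inner_commute algebra_simps)
    have yy: "y \<bullet> y = 1" using cs uu ww uw
      by (simp add: y_def inner_add_left inner_add_right inner_commute algebra_simps)
    have ax: "x \<bullet> (A *v x) = c * c * p + 2 * (c * s) * r + s * s * q"
      using rw by (simp add: x_def p_def q_def r_def matrix_vector_right_distrib matrix_vector_mult_scaleR
          inner_add_left inner_add_right algebra_simps)
    have ay: "y \<bullet> (A *v y) = s * s * p - 2 * (c * s) * r + c * c * q"
      using rw by (simp add: y_def p_def q_def r_def matrix_vector_right_distrib matrix_vector_mult_scaleR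
          inner_add_left inner_add_right algebra_simps)
    have "x \<bullet> (A *v x) - y \<bullet> (A *v y) \<le> largest_eig A - least_eig A"
      using largest_ge[OF A xx] least_le[OF A yy] by simp
    then show ?thesis unfolding ax ay by (simp add: algebra_simps)
  qed
  have "L \<le> largest_eig A - least_eig A"
  proof (cases "L = 0")
    case True
    then show ?thesis using gen[of 1 0] gen[of 0 1] by simp
  next
    case False
    have "L \<ge> 0" unfolding L_def by simp
    then have L0: "L > 0" using False by linarith
    have LL: "L^2 = (p - q)^2 + 4 * r^2" unfolding L_def by simp
    define k where "k = (p - q) / L"
    have kk: "1 - k^2 = 4 * r^2 / L^2"
    proof -
      have "L^2 > 0" using L0 by simp
      then have "1 - k^2 = (L^2 - (p-q)^2)/L^2" by (simp add: k_def power_divide field_simps)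
      also have "\<dots> = 4*r^2/L^2" using LL by simp
      finally show ?thesis .
    qed
    have "4 * r^2 / L^2 \<ge> 0" by simp
    then have k1: "k^2 \<le> 1" using kk by linarith
    then have kb: "-1 \<le> k" "k \<le> 1" using abs_le_square_iff[of k 1] by auto
    define c where "c = sqrt ((1 + k) / 2)"
    define sg where "sg = (if r \<ge> 0 then 1 else -1::real)"
    define s where "s = sg * sqrt ((1 - k) / 2)"
    have cc: "c * c = (1 + k) / 2" using kb by (simp add: c_def)
    have sg2: "sg * sg = 1" by (simp add: sg_def)
    have "s * s = (sg * sg) * (sqrt ((1 - k) / 2) * sqrt ((1 - k) / 2))" by (simp add: s_def mult_ac)
    then have ss: "s * s = (1 - k) / 2" using kb sg2 by simp
    have "c * s = sg * sqrt ((1 + k) / 2 * ((1 - k) / 2))"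
      unfolding c_def s_def real_sqrt_mult by (metis mult.left_commute)
    also have "(1 + k) / 2 * ((1 - k) / 2) = (r / L)^2"
      using kk by (simp add: field_simps power2_eq_square)
    also have "sg * sqrt ((r / L)^2) = r / L"
      using L0 by (simp add: sg_def abs_div)
    finally have csr: "c * s = r / L" .
    have "(c * c - s * s) * (p - q) + 4 * (c * s) * r = k * (p - q) + 4 * r^2 / L"
      using L0 by (simp add: cc ss csr power2_eq_square field_simps)
    also have "\<dots> = ((p - q)^2 + 4 * r^2) / L" using L0 by (simp add: k_def field_simps power2_eq_square)
    also have "\<dots> = L^2 / L" using LL by simp
    also have "\<dots> = L" using L0 by (simp add: power2_eq_square)
    finally have "L = (c * c - s * s) * (p - q) + 4 * (c * s) * r" by simp
    moreover have cs1: "c * c + s * s = 1" unfolding cc ss by (simp add: field_simps)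
    ultimately show ?thesis using gen[OF cs1] by linarith
  qed
  then show ?thesis unfolding L_def p_def q_def r_def .
qed



lemma relpowp_sym:
  assumes "\<forall>u v. E u v \<longrightarrow> E v u"
  shows "(E ^^ k) u v \<Longrightarrow> (E ^^ k) v u"
proof (induction k arbitrary: u v)
  case 0
  then show ?case by (auto elim: relpowp_0_E intro: relpowp_0_I)
next
  case (Suc k)
  from Suc.prems obtain y where "(E ^^ k) u y" "E y v" by (blast elim: relpowp_Suc_E)
  then show ?case using Suc.IH assms by (blast intro: relpowp_Suc_I2)
qed

lemma gdist_sym:
  assumes "simple_graph E"
  shows "gdist E u v = gdist E v u"
proof -
  have s: "\<forall>u v. E u v \<longrightarrow> E v u" using assms by (simp add: simple_graph_def)
  have "(\<lambda>k. (E ^^ k) u v) = (\<lambda>k. (E ^^ k) v u)"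
    using relpowp_sym[OF s] by blast
  then show ?thesis unfolding gdist_def by simp
qed

lemma gdist_refl: "gdist E v v = 0"
  unfolding gdist_def by (rule Least_eq_0) (rule relpowp_0_I)

lemma gdist_edge:
  assumes "simple_graph E" "E v w"
  shows "gdist E v w = 1"
  unfolding gdist_def
proof (rule Least_equality)
  show "(E ^^ 1) v w" using assms by (simp add: relcompp_apply)
  fix k assume "(E ^^ k) v w"
  moreover have "v \<noteq> w" using assms by (auto simp: simple_graph_def)
  ultimately show "1 \<le> k" by (cases k) (auto elim: relpowp_0_E)
qed

lemma gdist_two:
  assumes "simple_graph E" "bipartite_graph E" "E v w" "E v w'" "w \<noteq> w'"
  shows "gdist E w w' = 2"
  unfolding gdist_def
proof (rule Least_equality)
  have "E w v" using assms by (simp add: simple_graph_def)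
  moreover have "(E ^^ 1) v w'" using assms by (simp add: relcompp_apply)
  ultimately show "(E ^^ 2) w w'" using relpowp_Suc_I2[of E w v 1 w'] by (simp add: numeral_2_eq_2)
  fix k assume k: "(E ^^ k) w w'"
  obtain c :: "'a \<Rightarrow> bool" where c: "\<forall>u v. E u v \<longrightarrow> c u \<noteq> c v" using assms(2) unfolding bipartite_graph_def by blast
  have "\<not> E w w'" using c assms(3,4) by (metis (full_types))
  then show "2 \<le> k" using k assms(5)
    by (cases k; cases "k - 1") (auto elim: relpowp_0_E simp: numeral_2_eq_2)
qed

lemma ind_form:
  fixes M :: "real^'n^'n"
  shows "(\<chi> i. if i \<in> A then \<alpha> else 0) \<bullet> (M *v (\<chi> i. if i \<in> B then \<beta> else 0))
     = \<alpha> * \<beta> * (\<Sum>i\<in>A. \<Sum>j\<in>B. M$i$j)"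
proof -
  have "(\<chi> i. if i \<in> A then \<alpha> else 0) \<bullet> (M *v (\<chi> i. if i \<in> B then \<beta> else 0))
     = (\<Sum>i\<in>UNIV. (if i \<in> A then \<alpha> else 0) * (\<Sum>j\<in>UNIV. M$i$j * (if j \<in> B then \<beta> else 0)))"
    by (simp add: inner_vec_def matrix_vector_mult_def)
  also have "\<dots> = (\<Sum>i\<in>A. \<alpha> * (\<Sum>j\<in>B. M$i$j * \<beta>))"
    by (simp add: if_distrib if_distribR sum.If_cases Int_commute)
  also have "\<dots> = \<alpha> * \<beta> * (\<Sum>i\<in>A. \<Sum>j\<in>B. M$i$j)"
    by (simp add: sum_distrib_left sum_distrib_right mult_ac)
  finally show ?thesis .
qed

lemma ind_inner:
  "(\<chi> i. if i \<in> A then \<alpha> else 0) \<bullet> (\<chi> i. if i \<in> B then \<beta> else (0::real))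
     = \<alpha> * \<beta> * card (A \<inter> B)"
  by (simp add: inner_vec_def if_distrib if_distribR sum.If_cases Int_commute)


lemma vertex_bound:
  fixes E :: "'a::finite \<Rightarrow> 'a \<Rightarrow> bool" and v :: 'a
  assumes sg: "simple_graph E" and bp: "bipartite_graph E"
    and dv: "gdeg E v = max_deg E"
    and nd: "int (max_deg E) \<le> int CARD('a) - 2"
  shows "(let n = real CARD('a); \<Delta> = real (max_deg E);
         S = (\<Sum>v\<in>UNIV. transmission E v);
         a = (\<lambda>v. (\<Delta> + 1) * (S - 2 * transmission E v - 2 * avg_nbr_trans E v * \<Delta>)
                   + 2 * n * \<Delta>\<^sup>2);
         b = (\<lambda>v. (transmission E v)\<^sup>2 - 2 * S * \<Delta>\<^sup>2 + 2 * transmission E v * avg_nbr_trans E v * \<Delta>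
                   + (avg_nbr_trans E v)\<^sup>2 * \<Delta>\<^sup>2)
     in sqrt ((a v)\<^sup>2 + 4 * b v * (1 + \<Delta>) * (n - \<Delta> - 1))
                  / ((1 + \<Delta>) * (n - \<Delta> - 1))) \<le> distance_spread E"
proof -
  define n where "n = real CARD('a)"
  define \<Delta> where "\<Delta> = real (max_deg E)"
  define S where "S = (\<Sum>v\<in>UNIV. transmission E v)"
  define Nb where "Nb = {w. E v w}"
  define X where "X = insert v Nb"
  define Y where "Y = UNIV - X"
  define d where "d i j = real (gdist E i j)" for i j
  define N where "N = real (card X)"
  define M where "M = real (card Y)"
  define P where "P = (\<Sum>i\<in>X. \<Sum>j\<in>X. d i j)"
  define T where "T = (\<Sum>i\<in>X. \<Sum>j\<in>Y. d i j)"
  define Q where "Q = (\<Sum>i\<in>Y. \<Sum>j\<in>Y. d i j)"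
  define Z where "Z = (\<Sum>i\<in>X. transmission E i)"
  have vNb: "v \<notin> Nb" using sg by (simp add: Nb_def simple_graph_def)
  have cNb: "card Nb = max_deg E" using dv by (simp add: Nb_def gdeg_def)
  have cX: "card X = max_deg E + 1" using vNb cNb by (simp add: X_def)
  have cY: "card Y = CARD('a) - (max_deg E + 1)"
    unfolding Y_def by (simp add: card_Diff_subset cX)
  have NN: "N = 1 + \<Delta>" by (simp add: N_def cX \<Delta>_def)
  have MM: "M = n - \<Delta> - 1" using nd by (simp add: M_def cY \<Delta>_def n_def of_nat_diff)
  have M1: "M \<ge> 1" using nd by (simp add: MM \<Delta>_def n_def)
  have N1: "N \<ge> 1" by (simp add: NN \<Delta>_def)
  have dsym: "d i j = d j i" for i j using gdist_sym[OF sg] by (simp add: d_def)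
  have tr: "transmission E i = (\<Sum>j\<in>X. d i j) + (\<Sum>j\<in>Y. d i j)" for i
    unfolding transmission_def Y_def d_def
    by (metis (no_types, lifting) Int_UNIV_left finite sum.Int_Diff)
  have hZ: "Z = P + T" unfolding Z_def P_def T_def tr by (simp add: sum.distrib)
  have hS: "S = Z + T + Q"
  proof -
    have "S = Z + (\<Sum>i\<in>Y. transmission E i)"
      unfolding S_def Z_def Y_def by (metis (no_types, lifting) Int_UNIV_left finite sum.Int_Diff)
    also have "(\<Sum>i\<in>Y. transmission E i) = (\<Sum>i\<in>Y. \<Sum>j\<in>X. d i j) + Q"
      unfolding tr Q_def by (simp add: sum.distrib)
    also have "(\<Sum>i\<in>Y. \<Sum>j\<in>X. d i j) = T"
      unfolding T_def by (subst sum.swap) (simp add: dsym)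
    finally show ?thesis by simp
  qed
  have hZ2: "Z = transmission E v + avg_nbr_trans E v * \<Delta>"
  proof -
    have "Z = transmission E v + (\<Sum>w\<in>Nb. transmission E w)"
      unfolding Z_def X_def using vNb by simp
    moreover have "(\<Sum>w\<in>Nb. transmission E w) = avg_nbr_trans E v * \<Delta>"
    proof (cases "max_deg E = 0")
      case True
      then have "Nb = {}" using cNb by simp
      then show ?thesis using True by (simp add: \<Delta>_def)
    next
      case False
      then show ?thesis unfolding avg_nbr_trans_def \<Delta>_def dv[symmetric]
        by (simp add: Nb_def)
    qed
    ultimately show ?thesis by simp
  qed
  have hP: "P = 2 * \<Delta>^2"
  proof -
    have dvj: "d v j = 1" if "j \<in> Nb" for j using that gdist_edge[OF sg] by (simp add: Nb_def d_def)
    have inner: "(\<Sum>j\<in>Nb. d i j) = 2 * (\<Delta> - 1)" if i: "i \<in> Nb" for i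
    proof -
      have "(\<Sum>j\<in>Nb. d i j) = d i i + (\<Sum>j\<in>Nb - {i}. d i j)"
        using i by (simp add: sum.remove)
      also have "(\<Sum>j\<in>Nb - {i}. d i j) = (\<Sum>j\<in>Nb - {i}. 2)"
        using i gdist_two[OF sg bp] by (intro sum.cong) (auto simp: Nb_def d_def)
      also have "\<dots> = 2 * (\<Delta> - 1)"
      proof -
        have "card Nb > 0" using i by (auto simp: card_gt_0_iff)
        then have "max_deg E \<ge> 1" using cNb by simp
        then show ?thesis using i cNb by (simp add: \<Delta>_def of_nat_diff)
      qed
      finally show ?thesis by (simp add: d_def gdist_refl)
    qed
    have "P = (\<Sum>j\<in>X. d v j) + (\<Sum>i\<in>Nb. \<Sum>j\<in>X. d i j)"
      unfolding P_def X_def using vNb by simp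
    also have "(\<Sum>j\<in>X. d v j) = \<Delta>"
      unfolding X_def using vNb dvj cNb by (simp add: d_def gdist_refl \<Delta>_def)
    also have "(\<Sum>i\<in>Nb. \<Sum>j\<in>X. d i j) = (\<Sum>i\<in>Nb. 1 + 2 * (\<Delta> - 1))"
    proof (intro sum.cong refl)
      fix i assume i: "i \<in> Nb"
      have "d i v = 1" using dvj[OF i] dsym by simp
      then show "(\<Sum>j\<in>X. d i j) = 1 + 2 * (\<Delta> - 1)"
        unfolding X_def using vNb inner[OF i] by simp
    qed
    also have "\<dots> = \<Delta> * (1 + 2 * (\<Delta> - 1))" using cNb by (simp add: \<Delta>_def)
    finally show ?thesis by (simp add: algebra_simps power2_eq_square)
  qed
  have symmD: "symm (dist_matrix E)" unfolding symm_def dist_matrix_def using gdist_sym[OF sg] by simp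
  define u where "u = (\<chi> i. if i \<in> X then 1 / sqrt N else (0::real))"
  define w where "w = (\<chi> i. if i \<in> Y then 1 / sqrt M else (0::real))"
  have XY: "X \<inter> Y = {}" by (auto simp: Y_def)
  have sN: "sqrt N * sqrt N = N" using N1 by simp
  have sM: "sqrt M * sqrt M = M" using M1 by simp
  have uu: "u \<bullet> u = 1" unfolding u_def ind_inner using N1
    by (simp add: N_def[symmetric])
  have ww: "w \<bullet> w = 1" unfolding w_def ind_inner using M1
    by (simp add: M_def[symmetric])
  have uw: "u \<bullet> w = 0" unfolding u_def w_def ind_inner XY by simp
  have dm: "(\<Sum>i\<in>A. \<Sum>j\<in>B. dist_matrix E $ i $ j) = (\<Sum>i\<in>A. \<Sum>j\<in>B. d i j)" for A B
    by (simp add: dist_matrix_def d_def)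
  have pu: "u \<bullet> (dist_matrix E *v u) = P / N" unfolding u_def ind_form dm P_def[symmetric]
    using N1 by simp
  have qw: "w \<bullet> (dist_matrix E *v w) = Q / M" unfolding w_def ind_form dm Q_def[symmetric]
    using M1 by simp
  have rw: "u \<bullet> (dist_matrix E *v w) = T / sqrt (N * M)" unfolding u_def w_def ind_form dm T_def[symmetric]
    using N1 M1 by (simp add: real_sqrt_mult)
  have sp: "sqrt ((P / N - Q / M)^2 + 4 * (T / sqrt (N * M))^2) \<le> distance_spread E"
    using spread_ge[OF symmD uu ww uw] unfolding pu qw rw distance_spread_def .
  have nNM: "n = N + M" using NN MM by simp
  have ea: "(\<Delta> + 1) * (S - 2 * transmission E v - 2 * avg_nbr_trans E v * \<Delta>) + 2 * n * \<Delta>\<^sup>2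
      = N * Q + M * P"
  proof -
    have h1: "S - 2 * transmission E v - 2 * avg_nbr_trans E v * \<Delta> = Q - P"
      using hS hZ hZ2 by simp
    have h2: "\<Delta> + 1 = N" using NN by simp
    show ?thesis unfolding h1 h2 using hP nNM by (simp add: algebra_simps)
  qed
  have eb: "(transmission E v)\<^sup>2 - 2 * S * \<Delta>\<^sup>2 + 2 * transmission E v * avg_nbr_trans E v * \<Delta>
                   + (avg_nbr_trans E v)\<^sup>2 * \<Delta>\<^sup>2 = T^2 - P * Q"
  proof -
    have "(transmission E v)\<^sup>2 + 2 * transmission E v * avg_nbr_trans E v * \<Delta>
                   + (avg_nbr_trans E v)\<^sup>2 * \<Delta>\<^sup>2 = Z^2"
      unfolding hZ2 by (simp add: power2_eq_square algebra_simps)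
    moreover have "2 * S * \<Delta>\<^sup>2 = S * P" using hP by simp
    ultimately have "(transmission E v)\<^sup>2 - 2 * S * \<Delta>\<^sup>2 + 2 * transmission E v * avg_nbr_trans E v * \<Delta>
                   + (avg_nbr_trans E v)\<^sup>2 * \<Delta>\<^sup>2 = Z^2 - S * P" by linarith
    also have "\<dots> = T^2 - P * Q" unfolding hS hZ by (simp add: power2_eq_square algebra_simps)
    finally show ?thesis .
  qed
  have NM0: "N * M > 0" using N1 M1 by simp
  have key: "(N * Q + M * P)^2 + 4 * (T^2 - P * Q) * N * M = (P * M - Q * N)^2 + 4 * T^2 * (N * M)"
    by (simp add: power2_eq_square algebra_simps)
  have "(P / N - Q / M)^2 + 4 * (T / sqrt (N * M))^2 = ((P * M - Q * N)^2 + 4 * T^2 * (N * M)) / (N * M)^2"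
    using N1 M1 NM0 by (simp add: power_divide field_simps power2_eq_square)
  then have "sqrt ((P / N - Q / M)^2 + 4 * (T / sqrt (N * M))^2)
       = sqrt ((N * Q + M * P)^2 + 4 * (T^2 - P * Q) * N * M) / (N * M)"
    unfolding key using NM0 by (simp add: real_sqrt_divide)
  then have fin: "sqrt ((N * Q + M * P)^2 + 4 * (T^2 - P * Q) * N * M) / (N * M) \<le> distance_spread E"
    using sp by simp
  show ?thesis
    unfolding Let_def n_def[symmetric] \<Delta>_def[symmetric] S_def[symmetric] ea eb
    using fin NN MM by (simp add: mult.assoc)
qed
theorem theorem3p2:
  fixes E :: "'a::finite \<Rightarrow> 'a \<Rightarrow> bool" and K :: "'a set"
  assumes "simple_graph E" and "connected_graph E" and "bipartite_graph E"
    and "K \<noteq> {}"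
    and "\<forall>v\<in>K. gdeg E v = max_deg E"
    and "int (max_deg E) \<le> int CARD('a) - 2"
  shows "distance_spread E \<ge>
    (let n = real CARD('a); \<Delta> = real (max_deg E);
         S = (\<Sum>v\<in>UNIV. transmission E v);
         a = (\<lambda>v. (\<Delta> + 1) * (S - 2 * transmission E v - 2 * avg_nbr_trans E v * \<Delta>)
                   + 2 * n * \<Delta>\<^sup>2);
         b = (\<lambda>v. (transmission E v)\<^sup>2 - 2 * S * \<Delta>\<^sup>2 + 2 * transmission E v * avg_nbr_trans E v * \<Delta>
                   + (avg_nbr_trans E v)\<^sup>2 * \<Delta>\<^sup>2)
     in Max ((\<lambda>v. sqrt ((a v)\<^sup>2 + 4 * b v * (1 + \<Delta>) * (n - \<Delta> - 1))
                  / ((1 + \<Delta>) * (n - \<Delta> - 1))) ` K))"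
  proof -
  have fin: "finite K" by simp
  have "\<forall>v\<in>K. (let n = real CARD('a); \<Delta> = real (max_deg E);
         S = (\<Sum>v\<in>UNIV. transmission E v);
         a = (\<lambda>v. (\<Delta> + 1) * (S - 2 * transmission E v - 2 * avg_nbr_trans E v * \<Delta>)
                   + 2 * n * \<Delta>\<^sup>2);
         b = (\<lambda>v. (transmission E v)\<^sup>2 - 2 * S * \<Delta>\<^sup>2 + 2 * transmission E v * avg_nbr_trans E v * \<Delta>
                   + (avg_nbr_trans E v)\<^sup>2 * \<Delta>\<^sup>2)
     in sqrt ((a v)\<^sup>2 + 4 * b v * (1 + \<Delta>) * (n - \<Delta> - 1))
                  / ((1 + \<Delta>) * (n - \<Delta> - 1))) \<le> distance_spread E"
    using vertex_bound[OF assms(1) assms(3) _ assms(6)] assms(5) by blast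
  then show ?thesis unfolding Let_def using fin assms(4) by (simp add: Max_le_iff)
qed

end
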